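(* Let $\{\tilde\alpha,\tilde\beta\}$ be a dual timelike - spacelike Mannheim pair in $ID_1^3$. Then the dual curvature $P$ and dual torsion $Q$ of $\tilde\beta$ and the dual torsion $\tau$ of $\tilde\alpha$ satisfy $$P^2-Q^2=\tau^2\left(\frac{ds}{ds^*}\right)^2.$$
   Context: Dual numbers: $ID=\{a+\varepsilon a^*: a,a^*\in\mathbb R\}$ with $\varepsilon^2=0$. $ID_1^3$ is $ID^3$ with dual Lorentzian inner product $\langle \vec A,\vec B\rangle=\langle\vec a,\vec b\rangle+\varepsilon(\langle\vec a,\vec b^*\rangle+\langle\vec a^*,\vec b\rangle)$, $\langle\vec a,\vec b\rangle=-a_1b_1+a_2b_2+a_3b_3$. $\tilde\alpha$ is a dual timelike curve with dual arc length $s$, Frenet frame $\{T,N,B\}$ ($T$ timelike, $N,B$ spacelike unit), $T'=\kappa N$, $N'=\kappa T+\tau B$, $B'=-\tau N$. $\tilde\beta$ is a dual spacelike curve with dual timelike binormal, arc length $s^*$, frame $\{V_1,V_2,V_3\}$ ($V_3$ timelike), $V_1'=PV_2$, $V_2'=-PV_1+QV_3$, $V_3'=QV_2$. A dual timelike - spacelike Mannheim pair means that under a correspondence $s\mapsto s^*$ the dual binormal line of $\tilde\alpha$ coincides with the dual principal normal line of $\tilde\beta$ at corresponding points, i.e. $\tilde\beta(s^* )=\tilde\alpha(s)+\lambda B(s)$. *)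

theory Defs
  imports Complex_Main
begin

datatype dual = Dual (Re_d: real) (Eps_d: real)

instantiation dual :: comm_ring_1
begin
definition "0 = Dual 0 0"
definition "1 = Dual 1 0"
definition "x + y = Dual (Re_d x + Re_d y) (Eps_d x + Eps_d y)"
definition "x - y = Dual (Re_d x - Re_d y) (Eps_d x - Eps_d y)"
definition "- x = Dual (- Re_d x) (- Eps_d x)"
definition "x * y = Dual (Re_d x * Re_d y) (Re_d x * Eps_d y + Eps_d x * Re_d y)"
instance
  by standard (auto simp: zero_dual_def one_dual_def plus_dual_def minus_dual_def
      uminus_dual_def times_dual_def algebra_simps dual.expand)
end

text \<open>Inverse (meaningful for duals with non-zero real part):
  (a + eps b)^-1 = 1/a - eps b/a^2.\<close>
instantiation dual :: inverse
begin
definition "inverse x = Dual (inverse (Re_d x)) (- Eps_d x / (Re_d x)\<^sup>2)"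
definition "divide x y = x * inverse (y::dual)"
instance ..
end

datatype dvec = DVec (c1: dual) (c2: dual) (c3: dual)

definition vadd :: "dvec \<Rightarrow> dvec \<Rightarrow> dvec" where
  "vadd u v = DVec (c1 u + c1 v) (c2 u + c2 v) (c3 u + c3 v)"

definition smult :: "dual \<Rightarrow> dvec \<Rightarrow> dvec" where
  "smult a v = DVec (a * c1 v) (a * c2 v) (a * c3 v)"

text \<open><A,B> = <a,b> + eps(<a,b*> + <a*,b>) with <a,b> = -a1 b1 + a2 b2 + a3 b3;
  this equals -A1 B1 + A2 B2 + A3 B3 computed in dual arithmetic.\<close>
definition linner :: "dvec \<Rightarrow> dvec \<Rightarrow> dual" where
  "linner u v = - (c1 u * c1 v) + c2 u * c2 v + c3 u * c3 v"

definition dual_has_deriv :: "(real \<Rightarrow> dual) \<Rightarrow> dual \<Rightarrow> real \<Rightarrow> bool" where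
  "dual_has_deriv f d t \<longleftrightarrow>
     ((\<lambda>x. Re_d (f x)) has_real_derivative Re_d d) (at t) \<and>
     ((\<lambda>x. Eps_d (f x)) has_real_derivative Eps_d d) (at t)"

definition dvec_has_deriv :: "(real \<Rightarrow> dvec) \<Rightarrow> dvec \<Rightarrow> real \<Rightarrow> bool" where
  "dvec_has_deriv F D t \<longleftrightarrow>
     dual_has_deriv (\<lambda>x. c1 (F x)) (c1 D) t \<and>
     dual_has_deriv (\<lambda>x. c2 (F x)) (c2 D) t \<and>
     dual_has_deriv (\<lambda>x. c3 (F x)) (c3 D) t"

text \<open>Curves are parametrised by a common real parameter t on I; sigma t = ds/dt is the
  derivative of the dual arc length s with respect to t (positive real part), so that the
  derivative with respect to s of a function F is F'(t)/sigma(t).  The Frenet equations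
  X' = ... with respect to s are therefore written as d/dt X = sigma * (...).\<close>

definition timelike_frenet ::
  "real set \<Rightarrow> (real \<Rightarrow> dvec) \<Rightarrow> (real \<Rightarrow> dual) \<Rightarrow> (real \<Rightarrow> dvec) \<Rightarrow> (real \<Rightarrow> dvec)
   \<Rightarrow> (real \<Rightarrow> dvec) \<Rightarrow> (real \<Rightarrow> dual) \<Rightarrow> (real \<Rightarrow> dual) \<Rightarrow> bool" where
  "timelike_frenet I \<alpha> \<sigma> T N B \<kappa> \<tau> \<longleftrightarrow>
    (\<forall>t\<in>I. Re_d (\<sigma> t) > 0 \<and>
       dvec_has_deriv \<alpha> (smult (\<sigma> t) (T t)) t \<and>
       linner (T t) (T t) = -1 \<and> linner (N t) (N t) = 1 \<and> linner (B t) (B t) = 1 \<and>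
       linner (T t) (N t) = 0 \<and> linner (T t) (B t) = 0 \<and> linner (N t) (B t) = 0 \<and>
       dvec_has_deriv T (smult (\<sigma> t * \<kappa> t) (N t)) t \<and>
       dvec_has_deriv N (smult (\<sigma> t) (vadd (smult (\<kappa> t) (T t)) (smult (\<tau> t) (B t)))) t \<and>
       dvec_has_deriv B (smult (\<sigma> t * - \<tau> t) (N t)) t)"

definition spacelike_frenet ::
  "real set \<Rightarrow> (real \<Rightarrow> dvec) \<Rightarrow> (real \<Rightarrow> dual) \<Rightarrow> (real \<Rightarrow> dvec) \<Rightarrow> (real \<Rightarrow> dvec)
   \<Rightarrow> (real \<Rightarrow> dvec) \<Rightarrow> (real \<Rightarrow> dual) \<Rightarrow> (real \<Rightarrow> dual) \<Rightarrow> bool" where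
  "spacelike_frenet I \<beta> \<sigma> V1 V2 V3 P Q \<longleftrightarrow>
    (\<forall>t\<in>I. Re_d (\<sigma> t) > 0 \<and>
       dvec_has_deriv \<beta> (smult (\<sigma> t) (V1 t)) t \<and>
       linner (V1 t) (V1 t) = 1 \<and> linner (V2 t) (V2 t) = 1 \<and> linner (V3 t) (V3 t) = -1 \<and>
       linner (V1 t) (V2 t) = 0 \<and> linner (V1 t) (V3 t) = 0 \<and> linner (V2 t) (V3 t) = 0 \<and>
       dvec_has_deriv V1 (smult (\<sigma> t * P t) (V2 t)) t \<and>
       dvec_has_deriv V2 (smult (\<sigma> t) (vadd (smult (- P t) (V1 t)) (smult (Q t) (V3 t)))) t \<and>
       dvec_has_deriv V3 (smult (\<sigma> t * Q t) (V2 t)) t)"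

definition dline :: "dvec \<Rightarrow> dvec \<Rightarrow> dvec set" where
  "dline p d = {vadd p (smult x d) | x. True}"

text \<open>Dual timelike-spacelike Mannheim pair: at corresponding points (same parameter t)
  the binormal line of alpha equals the principal normal line of beta.\<close>
definition mannheim_pair ::
  "real set \<Rightarrow> (real \<Rightarrow> dvec) \<Rightarrow> (real \<Rightarrow> dvec) \<Rightarrow> (real \<Rightarrow> dvec) \<Rightarrow> (real \<Rightarrow> dvec) \<Rightarrow> bool" where
  "mannheim_pair I \<alpha> B \<beta> V2 \<longleftrightarrow> (\<forall>t\<in>I. dline (\<alpha> t) (B t) = dline (\<beta> t) (V2 t))"

end

theory Submission
  imports Defs
begin

lemma aux: fixes i s X Y :: dual assumes "i*s=1" "s*s*X = Y" shows "X = i*i*Y"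
proof -
  have "X = (i*s)*(i*s)*X" using assms by simp
  also have "\<dots> = i*i*(s*s*X)" by (simp add: algebra_simps)
  finally show ?thesis using assms by simp
qed
lemma fin: fixes P Q s a t :: dual assumes "inverse s * s = 1" "s*s*(P*P-Q*Q) = a*a*(t*t)"
  shows "P\<^sup>2 - Q\<^sup>2 = t\<^sup>2 * (a / s)\<^sup>2"
proof -
  have "P*P-Q*Q = inverse s * inverse s * (a*a*(t*t))" by (rule aux[OF assms])
  then show ?thesis by (simp add: power2_eq_square divide_dual_def algebra_simps)
qed
lemma dual_parts[simp]:
  "Re_d (x + y) = Re_d x + Re_d y" "Eps_d (x + y) = Eps_d x + Eps_d y"
  "Re_d (x - y) = Re_d x - Re_d y" "Eps_d (x - y) = Eps_d x - Eps_d y"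
  "Re_d (- x) = - Re_d x" "Eps_d (- x) = - Eps_d x"
  "Re_d (x * y) = Re_d x * Re_d y" "Eps_d (x * y) = Re_d x * Eps_d y + Eps_d x * Re_d y"
  "Re_d 0 = 0" "Eps_d 0 = 0" "Re_d 1 = 1" "Eps_d 1 = 0"
  by (simp_all add: plus_dual_def minus_dual_def uminus_dual_def times_dual_def
      zero_dual_def one_dual_def)

lemma dual_deriv_mult:
  assumes "dual_has_deriv f d t" "dual_has_deriv g e t"
  shows "dual_has_deriv (\<lambda>x. f x * g x) (d * g t + f t * e) t"
proof -
  have r: "((\<lambda>x. Re_d (f x)) has_real_derivative Re_d d) (at t)"
    "((\<lambda>x. Eps_d (f x)) has_real_derivative Eps_d d) (at t)"
    "((\<lambda>x. Re_d (g x)) has_real_derivative Re_d e) (at t)"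
    "((\<lambda>x. Eps_d (g x)) has_real_derivative Eps_d e) (at t)"
    using assms by (auto simp: dual_has_deriv_def)
  have 1: "((\<lambda>x. Re_d (f x) * Re_d (g x)) has_real_derivative
        Re_d d * Re_d (g t) + Re_d (f t) * Re_d e) (at t)"
    using DERIV_mult[OF r(1) r(3)] by (simp add: algebra_simps)
  have 2: "((\<lambda>x. Re_d (f x) * Eps_d (g x) + Eps_d (f x) * Re_d (g x)) has_real_derivative
        (Re_d d * Eps_d (g t) + Re_d (f t) * Eps_d e) + (Eps_d d * Re_d (g t) + Eps_d (f t) * Re_d e)) (at t)"
    using DERIV_add[OF DERIV_mult[OF r(1) r(4)] DERIV_mult[OF r(2) r(3)]]
    by (simp add: algebra_simps)
  show ?thesis unfolding dual_has_deriv_def using 1 2 by (simp add: algebra_simps)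
qed

lemma dual_deriv_const: "dual_has_deriv (\<lambda>x. c) 0 t"
  by (simp add: dual_has_deriv_def)

lemma dual_deriv_unique:
  assumes "dual_has_deriv f d t" "dual_has_deriv g e t" "open I" "t \<in> I"
    "\<And>x. x \<in> I \<Longrightarrow> f x = g x"
  shows "d = e"
proof -
  have a: "((\<lambda>x. Re_d (g x)) has_real_derivative Re_d d) (at t)"
    using has_field_derivative_transform_within_open[of "\<lambda>x. Re_d (f x)" "Re_d d" t I]
      assms by (auto simp: dual_has_deriv_def)
  have b: "((\<lambda>x. Eps_d (g x)) has_real_derivative Eps_d d) (at t)"
    using has_field_derivative_transform_within_open[of "\<lambda>x. Eps_d (f x)" "Eps_d d" t I]
      assms by (auto simp: dual_has_deriv_def)
  have "Re_d d = Re_d e" using DERIV_unique a assms(2) by (auto simp: dual_has_deriv_def)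
  moreover have "Eps_d d = Eps_d e" using DERIV_unique b assms(2) by (auto simp: dual_has_deriv_def)
  ultimately show ?thesis by (simp add: dual.expand)
qed

lemma dual_deriv_add:
  assumes "dual_has_deriv f d t" "dual_has_deriv g e t"
  shows "dual_has_deriv (\<lambda>x. f x + g x) (d + e) t"
  using assms by (auto simp: dual_has_deriv_def intro!: derivative_eq_intros)

lemma dual_deriv_uminus:
  assumes "dual_has_deriv f d t"
  shows "dual_has_deriv (\<lambda>x. - f x) (- d) t"
  using assms by (auto simp: dual_has_deriv_def intro!: derivative_eq_intros)

lemma linner_deriv:
  assumes "dvec_has_deriv U D t" "dvec_has_deriv W E t"
  shows "dual_has_deriv (\<lambda>x. linner (U x) (W x)) (linner D (W t) + linner (U t) E) t"
proof -
  have "dual_has_deriv (\<lambda>x. - (c1 (U x) * c1 (W x)) + c2 (U x) * c2 (W x) + c3 (U x) * c3 (W x))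
    (- (c1 D * c1 (W t) + c1 (U t) * c1 E) + (c2 D * c2 (W t) + c2 (U t) * c2 E)
      + (c3 D * c3 (W t) + c3 (U t) * c3 E)) t"
    using assms unfolding dvec_has_deriv_def
    by (intro dual_deriv_add dual_deriv_uminus dual_deriv_mult) auto
  then show ?thesis by (simp add: linner_def algebra_simps)
qed

lemma linner_smult_l: "linner (smult a u) v = a * linner u v"
  by (simp add: linner_def smult_def algebra_simps)
lemma linner_smult_r: "linner u (smult a v) = a * linner u v"
  by (simp add: linner_def smult_def algebra_simps)
lemma linner_vadd_l: "linner (vadd u w) v = linner u v + linner w v"
  by (simp add: linner_def vadd_def algebra_simps)
lemma linner_vadd_r: "linner u (vadd v w) = linner u v + linner u w"
  by (simp add: linner_def vadd_def algebra_simps)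
lemma linner_sym: "linner u v = linner v u"
  by (simp add: linner_def algebra_simps)

lemma vadd_smult0: "vadd p (smult 0 d) = p"
  by (cases p) (simp add: vadd_def smult_def)

lemma dual_sq1: "(m::dual) * m = 1 \<Longrightarrow> Re_d m \<noteq> 0"
  by (metis dual_parts(7) dual_parts(11) mult_zero_left zero_neq_one)

theorem corollary3p4:
  fixes I :: "real set"
    and \<alpha> \<beta> T N B V1 V2 V3 :: "real \<Rightarrow> dvec"
    and \<sigma> \<sigma>s \<kappa> \<tau> P Q :: "real \<Rightarrow> dual"
  assumes "open I"
    and "timelike_frenet I \<alpha> \<sigma> T N B \<kappa> \<tau>"
    and "spacelike_frenet I \<beta> \<sigma>s V1 V2 V3 P Q"
    and "mannheim_pair I \<alpha> B \<beta> V2"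
    and "t \<in> I"
  shows "(P t)\<^sup>2 - (Q t)\<^sup>2 = (\<tau> t)\<^sup>2 * (\<sigma> t / \<sigma>s t)\<^sup>2"
proof -
  define \<mu> where "\<mu> x = linner (V2 x) (B x)" for x
  have V2B: "V2 x = smult (\<mu> x) (B x)" and mu2: "\<mu> x * \<mu> x = 1" if x: "x \<in> I" for x
  proof -
    have eq: "dline (\<alpha> x) (B x) = dline (\<beta> x) (V2 x)"
      using assms(4) x by (simp add: mannheim_pair_def)
    have m0: "\<beta> x \<in> dline (\<beta> x) (V2 x)"
      unfolding dline_def by (rule CollectI, rule exI[of _ 0], simp add: vadd_smult0)
    have "\<beta> x \<in> dline (\<alpha> x) (B x)" using m0 eq by simp
    then obtain a where a: "\<beta> x = vadd (\<alpha> x) (smult a (B x))"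
      unfolding dline_def by blast
    have m1: "vadd (\<beta> x) (smult 1 (V2 x)) \<in> dline (\<beta> x) (V2 x)"
      unfolding dline_def by blast
    have "vadd (\<beta> x) (smult 1 (V2 x)) \<in> dline (\<alpha> x) (B x)" using m1 eq by simp
    then obtain b where b: "vadd (\<beta> x) (smult 1 (V2 x)) = vadd (\<alpha> x) (smult b (B x))"
      unfolding dline_def by blast
    have v: "V2 x = smult (b - a) (B x)"
    proof -
      have b': "vadd (vadd (\<alpha> x) (smult a (B x))) (smult 1 (V2 x)) = vadd (\<alpha> x) (smult b (B x))"
        using a b by simp
      have 1: "c1 (V2 x) = (b - a) * c1 (B x)"
        using arg_cong[OF b', of c1] by (simp add: vadd_def smult_def algebra_simps)
      have 2: "c2 (V2 x) = (b - a) * c2 (B x)"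
        using arg_cong[OF b', of c2] by (simp add: vadd_def smult_def algebra_simps)
      have 3: "c3 (V2 x) = (b - a) * c3 (B x)"
        using arg_cong[OF b', of c3] by (simp add: vadd_def smult_def algebra_simps)
      show ?thesis using 1 2 3 by (simp add: smult_def dvec.expand)
    qed
    have BB: "linner (B x) (B x) = 1" and VV: "linner (V2 x) (V2 x) = 1"
      using assms(2,3) x by (auto simp: timelike_frenet_def spacelike_frenet_def)
    have m: "\<mu> x = b - a" unfolding \<mu>_def v linner_smult_l BB by simp
    show "V2 x = smult (\<mu> x) (B x)" using v m by simp
    show "\<mu> x * \<mu> x = 1" using VV unfolding v m linner_smult_l linner_smult_r BB
      by (simp add: mult.assoc)
  qed
  have tf: "dvec_has_deriv B (smult (\<sigma> t * - \<tau> t) (N t)) t"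
    "linner (N t) (N t) = 1" "linner (B t) (B t) = 1"
    using assms(2,5) by (auto simp: timelike_frenet_def)
  have sf: "dvec_has_deriv V2 (smult (\<sigma>s t) (vadd (smult (- P t) (V1 t)) (smult (Q t) (V3 t)))) t"
    "linner (V1 t) (V1 t) = 1" "linner (V3 t) (V3 t) = -1" "linner (V1 t) (V3 t) = 0"
    "dvec_has_deriv V2 (smult (\<sigma>s t) (vadd (smult (- P t) (V1 t)) (smult (Q t) (V3 t)))) t"
    "Re_d (\<sigma>s t) > 0"
    using assms(3,5) by (auto simp: spacelike_frenet_def)
  have tfV: "dvec_has_deriv V2 (smult (\<sigma>s t) (vadd (smult (- P t) (V1 t)) (smult (Q t) (V3 t)))) t"
    using sf by simp
  obtain D2 where D2: "dvec_has_deriv V2 D2 t" using tfV by blast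
  define \<mu>' where "\<mu>' = linner D2 (B t) + linner (V2 t) (smult (\<sigma> t * - \<tau> t) (N t))"
  have dmu: "dual_has_deriv \<mu> \<mu>' t"
    unfolding \<mu>_def \<mu>'_def by (rule linner_deriv[OF D2 tf(1)])
  have "\<mu>' * \<mu> t + \<mu> t * \<mu>' = 0"
    using dual_deriv_unique[OF dual_deriv_mult[OF dmu dmu] dual_deriv_const[of 1] assms(1,5)]
      mu2 by simp
  then have h: "\<mu>' * \<mu> t + \<mu> t * \<mu>' = 0" .
  have nz: "Re_d (\<mu> t) \<noteq> 0" using dual_sq1 mu2 assms(5) by blast
  have r1: "Re_d \<mu>' * Re_d (\<mu> t) + Re_d (\<mu> t) * Re_d \<mu>' = 0"
    using arg_cong[OF h, of Re_d] by (simp only: dual_parts)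
  then have "Re_d \<mu>' * Re_d (\<mu> t) = 0" by (simp add: mult.commute)
  then have r: "Re_d \<mu>' = 0" using nz by simp
  have "Re_d \<mu>' * Eps_d (\<mu> t) + Eps_d \<mu>' * Re_d (\<mu> t)
      + (Re_d (\<mu> t) * Eps_d \<mu>' + Eps_d (\<mu> t) * Re_d \<mu>') = 0"
    using arg_cong[OF h, of Eps_d] by (simp only: dual_parts)
  then have "Eps_d \<mu>' * Re_d (\<mu> t) = 0" using r by (simp add: mult.commute)
  then have e: "Eps_d \<mu>' = 0" using nz by simp
  have mu0: "\<mu>' = 0" using r e by (simp add: dual.expand)
  have comp: "dual_has_deriv (\<lambda>x. \<mu> x * ck (B x)) (\<mu>' * ck (B t) + \<mu> t * ck Bd) t"
    if "dual_has_deriv (\<lambda>x. ck (B x)) (ck Bd) t" for ck Bd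
    using dual_deriv_mult[OF dmu that] .
  have eqD: "smult (\<sigma>s t) (vadd (smult (- P t) (V1 t)) (smult (Q t) (V3 t)))
      = smult (\<mu> t) (smult (\<sigma> t * - \<tau> t) (N t))" (is "?L = ?R")
  proof -
    have cs: "dual_has_deriv (\<lambda>x. c1 (V2 x)) (c1 ?L) t"
      "dual_has_deriv (\<lambda>x. c2 (V2 x)) (c2 ?L) t"
      "dual_has_deriv (\<lambda>x. c3 (V2 x)) (c3 ?L) t"
      using tfV by (auto simp: dvec_has_deriv_def)
    have bs: "dual_has_deriv (\<lambda>x. c1 (B x)) (c1 (smult (\<sigma> t * - \<tau> t) (N t))) t"
      "dual_has_deriv (\<lambda>x. c2 (B x)) (c2 (smult (\<sigma> t * - \<tau> t) (N t))) t"
      "dual_has_deriv (\<lambda>x. c3 (B x)) (c3 (smult (\<sigma> t * - \<tau> t) (N t))) t"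
      using tf(1) by (auto simp: dvec_has_deriv_def)
    have e1: "c1 ?L = \<mu>' * c1 (B t) + \<mu> t * c1 (smult (\<sigma> t * - \<tau> t) (N t))"
      by (rule dual_deriv_unique[OF cs(1) comp[OF bs(1)] assms(1,5)]) (simp add: V2B smult_def)
    have e2: "c2 ?L = \<mu>' * c2 (B t) + \<mu> t * c2 (smult (\<sigma> t * - \<tau> t) (N t))"
      by (rule dual_deriv_unique[OF cs(2) comp[OF bs(2)] assms(1,5)]) (simp add: V2B smult_def)
    have e3: "c3 ?L = \<mu>' * c3 (B t) + \<mu> t * c3 (smult (\<sigma> t * - \<tau> t) (N t))"
      by (rule dual_deriv_unique[OF cs(3) comp[OF bs(3)] assms(1,5)]) (simp add: V2B smult_def)
    show ?thesis using e1 e2 e3 mu0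
      by (cases ?L) (simp add: smult_def)
  qed
  have s31: "linner (V3 t) (V1 t) = 0" using sf(4) linner_sym by metis
  have LL: "linner ?L ?L = \<sigma>s t * \<sigma>s t * (P t * P t - Q t * Q t)"
    unfolding linner_smult_l linner_smult_r linner_vadd_l linner_vadd_r sf(2,3,4) s31
    by (simp add: algebra_simps)
  have RR0: "linner ?R ?R = \<mu> t * (\<mu> t * (\<sigma> t * - \<tau> t * (\<sigma> t * - \<tau> t * 1)))"
    unfolding linner_smult_l linner_smult_r tf(2) by (simp only: mult.left_commute)
  have RR: "linner ?R ?R = \<sigma> t * \<sigma> t * (\<tau> t * \<tau> t)"
    unfolding RR0 mult.assoc[symmetric, of "\<mu> t" "\<mu> t"] mu2[OF assms(5)]
    by (simp add: algebra_simps)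
  have LR: "linner ?L ?L = linner ?R ?R" by (simp only: eqD)
  have key: "\<sigma>s t * \<sigma>s t * (P t * P t - Q t * Q t) = \<sigma> t * \<sigma> t * (\<tau> t * \<tau> t)"
    using LR unfolding LL RR .
  have inv: "inverse (\<sigma>s t) * \<sigma>s t = 1"
  proof -
    have a: "Re_d (\<sigma>s t) \<noteq> 0" using sf(6) by simp
    have "Re_d (inverse (\<sigma>s t) * \<sigma>s t) = 1"
      using a by (simp add: inverse_dual_def)
    moreover have "Eps_d (inverse (\<sigma>s t) * \<sigma>s t) = 0"
      using a by (simp add: inverse_dual_def power2_eq_square divide_inverse)
    ultimately show ?thesis by (simp add: dual.expand)
  qed
  show ?thesis by (rule fin[OF inv key])
qed

end
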